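(* Let $G$ be a connected finite simple graph, $\mathcal{N}G$ its normal graph algebra over a field $\mathbb{F}$ of characteristic not $2$, and let $\mathfrak{e}=[a,b]$ be an edge of $G$. Then there exists $u\in U_G$ with $u^2=\mathfrak{e}$ if and only if one of the following holds: (1) $\mathfrak{e}$ lies in an odd cycle and $G-\mathfrak{e}$ is bipartite; (2) $\mathfrak{e}$ is a bridge and at least one connected component of $G-\mathfrak{e}$ is bipartite.
   Context: For a finite simple graph $G$ with vertex set $VG$ and edge set $EG$ (edge with endpoints $x,y$ written $[x,y]$), the normal graph algebra $\mathcal{N}G$ is the $\mathbb{F}$-vector space $U_G\oplus\mathfrak{Z}_G$, where $U_G$ has basis $VG$ and $\mathfrak{Z}_G$ has basis $EG$, with commutative bilinear product determined by: for distinct vertices $x,y$, $xy=[x,y]$ if adjacent and $0$ otherwise; $x^2=\sum_{y\sim x}[x,y]$; all products involving an element of $\mathfrak{Z}_G$ are $0$. Equivalently, for $u=\sum_x\theta_x x$, $u^2=\sum_{[x,y]\in EG}(\theta_x+\theta_y)^2[x,y]$. $G-\mathfrak{e}$ denotes $G$ with the edge $\mathfrak{e}$ removed (vertices kept). *)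

theory Defs
  imports Main
begin

definition simple_graph :: "'a set \<Rightarrow> ('a \<Rightarrow> 'a \<Rightarrow> bool) \<Rightarrow> bool" where
  "simple_graph V E \<longleftrightarrow> finite V \<and> (\<forall>x y. E x y \<longrightarrow> x \<in> V \<and> y \<in> V)
     \<and> (\<forall>x y. E x y \<longrightarrow> E y x) \<and> (\<forall>x. \<not> E x x)"

definition edges :: "('a \<Rightarrow> 'a \<Rightarrow> bool) \<Rightarrow> 'a set set" where
  "edges E = {{x, y} | x y. E x y}"

definition reach :: "('a \<Rightarrow> 'a \<Rightarrow> bool) \<Rightarrow> 'a \<Rightarrow> 'a \<Rightarrow> bool" where
  "reach E = E\<^sup>*\<^sup>*"

definition connected_graph :: "'a set \<Rightarrow> ('a \<Rightarrow> 'a \<Rightarrow> bool) \<Rightarrow> bool" where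
  "connected_graph V E \<longleftrightarrow> V \<noteq> {} \<and> (\<forall>x\<in>V. \<forall>y\<in>V. reach E x y)"

definition remove_edge :: "('a \<Rightarrow> 'a \<Rightarrow> bool) \<Rightarrow> 'a \<Rightarrow> 'a \<Rightarrow> ('a \<Rightarrow> 'a \<Rightarrow> bool)" where
  "remove_edge E a b = (\<lambda>x y. E x y \<and> {x, y} \<noteq> {a, b})"

definition components :: "'a set \<Rightarrow> ('a \<Rightarrow> 'a \<Rightarrow> bool) \<Rightarrow> 'a set set" where
  "components V E = {{y \<in> V. reach E x y} | x. x \<in> V}"

definition induced :: "('a \<Rightarrow> 'a \<Rightarrow> bool) \<Rightarrow> 'a set \<Rightarrow> ('a \<Rightarrow> 'a \<Rightarrow> bool)" where
  "induced E C = (\<lambda>x y. E x y \<and> x \<in> C \<and> y \<in> C)"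

definition bipartite :: "'a set \<Rightarrow> ('a \<Rightarrow> 'a \<Rightarrow> bool) \<Rightarrow> bool" where
  "bipartite V E \<longleftrightarrow> (\<exists>A \<subseteq> V. \<forall>x y. E x y \<longrightarrow> (x \<in> A \<longleftrightarrow> y \<notin> A))"

definition is_cycle :: "('a \<Rightarrow> 'a \<Rightarrow> bool) \<Rightarrow> 'a list \<Rightarrow> bool" where
  "is_cycle E c \<longleftrightarrow> distinct c \<and> length c \<ge> 3 \<and>
     (\<forall>i < length c. E (c ! i) (c ! ((i + 1) mod length c)))"

definition edge_in_cycle :: "'a list \<Rightarrow> 'a \<Rightarrow> 'a \<Rightarrow> bool" where
  "edge_in_cycle c a b \<longleftrightarrow> (\<exists>i < length c. {c ! i, c ! ((i + 1) mod length c)} = {a, b})"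

definition in_odd_cycle :: "('a \<Rightarrow> 'a \<Rightarrow> bool) \<Rightarrow> 'a \<Rightarrow> 'a \<Rightarrow> bool" where
  "in_odd_cycle E a b \<longleftrightarrow> (\<exists>c. is_cycle E c \<and> odd (length c) \<and> edge_in_cycle c a b)"

definition is_bridge :: "'a set \<Rightarrow> ('a \<Rightarrow> 'a \<Rightarrow> bool) \<Rightarrow> 'a \<Rightarrow> 'a \<Rightarrow> bool" where
  "is_bridge V E a b \<longleftrightarrow> E a b \<and>
     card (components V (remove_edge E a b)) > card (components V E)"

text \<open>Elements of U_G: coefficient functions \<theta> on vertices, zero
  outside V (u = \<Sum>x. \<theta> x \<cdot> x). Elements of Z_G: coefficient functions on edges (zero
  off the edge set). The product of u,v \<in> U_G, extended bilinearly from
  xy = [x,y] (adjacent), 0 (non-adjacent distinct), x^2 = \<Sum>_{y~x} [x,y],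
  has coefficient (\<theta>_x + \<theta>_y)(\<phi>_x + \<phi>_y) at the edge [x,y].\<close>
definition U_G :: "'a set \<Rightarrow> ('a \<Rightarrow> 'f::field) set" where
  "U_G V = {\<theta>. \<forall>x. x \<notin> V \<longrightarrow> \<theta> x = 0}"

definition nga_mult :: "('a \<Rightarrow> 'a \<Rightarrow> bool) \<Rightarrow> ('a \<Rightarrow> 'f::field) \<Rightarrow> ('a \<Rightarrow> 'f) \<Rightarrow> ('a set \<Rightarrow> 'f)" where
  "nga_mult E \<theta> \<phi> = (\<lambda>e. if e \<in> edges E then (\<Sum>x\<in>e. \<theta> x) * (\<Sum>x\<in>e. \<phi> x) else 0)"

definition edge_vec :: "'a \<Rightarrow> 'a \<Rightarrow> ('a set \<Rightarrow> 'f::field)" where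
  "edge_vec a b = (\<lambda>e. if e = {a, b} then 1 else 0)"

end

theory Submission
  imports Defs "HOL-Library.Transitive_Closure_Table"
begin

lemma two_nz: assumes "CHAR('f::field) \<noteq> 2" shows "(2::'f) \<noteq> 0"
proof
  assume "(2::'f) = 0"
  hence "of_nat 2 = (0::'f)" by simp
  hence "CHAR('f) dvd 2" by (simp only: of_nat_eq_0_iff_char_dvd)
  moreover have "CHAR('f) \<noteq> 1"
    using of_nat_CHAR[where 'a='f] by (metis of_nat_1 one_neq_zero)
  moreover have "CHAR('f) \<le> 2" using \<open>CHAR('f) dvd 2\<close> by (simp add: dvd_imp_le)
  moreover have "CHAR('f) \<noteq> 0" using \<open>CHAR('f) dvd 2\<close> by (metis dvd_0_left_iff zero_neq_numeral)
  ultimately show False using assms by linarith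
qed

lemma path_idx:
  assumes "rtrancl_path r x xs y"
  shows "(x#xs) ! length xs = y \<and> (\<forall>j<length xs. r ((x#xs)!j) ((x#xs)!Suc j))"
  using assms
proof (induction rule: rtrancl_path.induct)
  case (base x) then show ?case by simp
next
  case (step x y ys z)
  show ?case
  proof (intro conjI allI impI)
    show "(x # y # ys) ! length (y # ys) = z" using step by simp
    fix j assume "j < length (y#ys)"
    then show "r ((x # y # ys) ! j) ((x # y # ys) ! Suc j)"
      using step by (cases j) auto
  qed
qed

lemma reach_sym:
  assumes "\<forall>x y. R x y \<longrightarrow> R y x" "reach R x y" shows "reach R y x"
  using assms(2) unfolding reach_def
proof (induction rule: rtranclp_induct)
  case base then show ?case by simp
next
  case (step y z) then show ?case using assms(1)
    by (meson converse_rtranclp_into_rtranclp)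
qed

lemma reach_pm:
  fixes u :: "'a \<Rightarrow> 'f::field"
  assumes "\<forall>x y. R x y \<longrightarrow> u x + u y = 0" "reach R x y"
  shows "u y = u x \<or> u y = - u x"
  using assms(2) unfolding reach_def
proof (induction rule: rtranclp_induct)
  case base then show ?case by simp
next
  case (step y z)
  have "u z = - u y" using assms(1) step(2) by (metis add_eq_0_iff)
  then show ?case using step(3) by auto
qed

lemma arith_cyc:
  fixes i k n :: nat
  assumes "i < n" "3 \<le> n" "k = (i+1) mod n" "(k+1) mod n = i"
  shows False
proof (cases "i + 1 < n")
  case True
  then have "k = i+1" using assms by simp
  then show False using assms by (cases "i+2 < n") (auto simp: mod_if split: if_splits)
next
  case False
  then have "i + 1 = n" using assms by simp
  then have "k = 0" using assms by simp
  then show False using assms by auto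
qed

lemma sq_iff:
  fixes V :: "'a set" and E :: "'a \<Rightarrow> 'a \<Rightarrow> bool"
  assumes sg: "simple_graph V E" and ab: "E a b"
  shows "(\<exists>u \<in> (U_G V :: ('a \<Rightarrow> 'f::field) set). nga_mult E u u = edge_vec a b) \<longleftrightarrow>
    (\<exists>u \<in> (U_G V :: ('a \<Rightarrow> 'f) set). (\<forall>x y. remove_edge E a b x y \<longrightarrow> u x + u y = 0) \<and> u a + u b = 1)"
proof -
  have irr: "\<And>x y. E x y \<Longrightarrow> x \<noteq> y" using sg unfolding simple_graph_def by blast
  have nm: "\<And>x y (u::'a\<Rightarrow>'f). E x y \<Longrightarrow> nga_mult E u u {x,y} = (u x + u y)^2"
  proof -
    fix x y and u :: "'a\<Rightarrow>'f" assume "E x y"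
    then have "{x,y} \<in> edges E" "x \<noteq> y" using irr unfolding edges_def by auto
    then show "nga_mult E u u {x,y} = (u x + u y)^2"
      unfolding nga_mult_def by (simp add: power2_eq_square)
  qed
  show ?thesis
  proof
    assume "\<exists>u \<in> (U_G V :: ('a \<Rightarrow> 'f) set). nga_mult E u u = edge_vec a b"
    then obtain u :: "'a \<Rightarrow> 'f" where uU: "u \<in> U_G V" and eq: "nga_mult E u u = edge_vec a b" by blast
    have "(u a + u b)^2 = 1" using nm[OF ab, of u] eq unfolding edge_vec_def by simp
    then have s: "u a + u b = 1 \<or> u a + u b = -1" by (simp add: power2_eq_1_iff)
    have g: "\<forall>x y. remove_edge E a b x y \<longrightarrow> u x + u y = 0"
    proof (intro allI impI)
      fix x y assume "remove_edge E a b x y"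
      then have "E x y" "{x,y} \<noteq> {a,b}" unfolding remove_edge_def by auto
      then have "(u x + u y)^2 = 0" using nm[of x y u] eq unfolding edge_vec_def by (metis (mono_tags))
      then show "u x + u y = 0" by simp
    qed
    show "\<exists>u \<in> (U_G V :: ('a \<Rightarrow> 'f) set). (\<forall>x y. remove_edge E a b x y \<longrightarrow> u x + u y = 0) \<and> u a + u b = 1"
    proof (cases "u a + u b = 1")
      case True then show ?thesis using uU g by blast
    next
      case False
      then have "u a + u b = -1" using s by blast
      moreover have "(\<lambda>x. - u x) \<in> U_G V" using uU unfolding U_G_def by auto
      moreover have "\<forall>x y. remove_edge E a b x y \<longrightarrow> - u x + - u y = 0" using g
        by (metis add_uminus_conv_diff minus_add_distrib neg_equal_0_iff_equal)
      moreover have "- u a + - u b = 1" using \<open>u a + u b = -1\<close> by (metis minus_add_distrib minus_minus)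
      ultimately show ?thesis
        by (intro bexI[of _ "\<lambda>x. - u x"]) simp_all
    qed
  next
    assume "\<exists>u \<in> (U_G V :: ('a \<Rightarrow> 'f) set). (\<forall>x y. remove_edge E a b x y \<longrightarrow> u x + u y = 0) \<and> u a + u b = 1"
    then obtain u :: "'a \<Rightarrow> 'f" where uU: "u \<in> U_G V" and g: "\<forall>x y. remove_edge E a b x y \<longrightarrow> u x + u y = 0"
      and s: "u a + u b = 1" by blast
    have "nga_mult E u u = edge_vec a b"
    proof
      fix e
      show "nga_mult E u u e = edge_vec a b e"
      proof (cases "e \<in> edges E")
        case True
        then obtain x y where e: "e = {x,y}" "E x y" unfolding edges_def by auto
        show ?thesis
        proof (cases "e = {a,b}")
          case True
          then have "nga_mult E u u e = (u a + u b)^2" using nm[OF ab, of u] by simp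
          then show ?thesis using s True unfolding edge_vec_def by simp
        next
          case False
          then have "remove_edge E a b x y" using e unfolding remove_edge_def by auto
          then have "u x + u y = 0" using g by blast
          then show ?thesis using nm[OF e(2), of u] e False unfolding edge_vec_def by simp
        qed
      next
        case False
        moreover have "{a,b} \<in> edges E" using ab unfolding edges_def by auto
        ultimately show ?thesis unfolding nga_mult_def edge_vec_def by auto
      qed
    qed
    then show "\<exists>u \<in> (U_G V :: ('a \<Rightarrow> 'f) set). nga_mult E u u = edge_vec a b" using uU by blast
  qed
qed


lemma R_props:
  assumes "simple_graph V E"
  shows "\<forall>x y. remove_edge E a b x y \<longrightarrow> remove_edge E a b y x"
    and "\<And>x y. remove_edge E a b x y \<Longrightarrow> x \<in> V \<and> y \<in> V"
    and "\<And>x y. remove_edge E a b x y \<Longrightarrow> E x y"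
  using assms unfolding simple_graph_def remove_edge_def by (auto simp: insert_commute)

lemma reach_trans: "reach R x y \<Longrightarrow> reach R y z \<Longrightarrow> reach R x z"
  unfolding reach_def by simp

lemma reach_closed:
  assumes "\<And>x y. R x y \<Longrightarrow> x \<in> V \<and> y \<in> V" "reach R x y" "x \<in> V" shows "y \<in> V"
  using assms(2,3) unfolding reach_def
  by (induction rule: rtranclp_induct) (auto dest: assms(1))

lemma conn_ab:
  assumes sg: "simple_graph V E" and cg: "connected_graph V E" and ab: "E a b" and y: "y \<in> V"
  shows "reach (remove_edge E a b) a y \<or> reach (remove_edge E a b) b y"
proof -
  have "a \<in> V" using sg ab unfolding simple_graph_def by blast
  then have "E\<^sup>*\<^sup>* a y" using cg y unfolding connected_graph_def reach_def by blast
  then show ?thesis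
  proof (induction rule: rtranclp_induct)
    case base then show ?case by (simp add: reach_def)
  next
    case (step y z)
    show ?case
    proof (cases "remove_edge E a b y z")
      case True then show ?thesis using step(3) unfolding reach_def
        by (meson rtranclp.rtrancl_into_rtrancl)
    next
      case False
      then have "z = a \<or> z = b" using step(2) unfolding remove_edge_def by (auto simp: doubleton_eq_iff)
      then show ?thesis unfolding reach_def by auto
    qed
  qed
qed

lemma comps_conn:
  assumes "connected_graph V E" shows "components V E = {V}"
proof -
  have "components V E = (\<lambda>x. {y \<in> V. reach E x y}) ` V" unfolding components_def by blast
  also have "\<dots> = (\<lambda>x. V) ` V"
  proof (rule image_cong)
    fix x assume "x \<in> V"
    then show "{y \<in> V. reach E x y} = V" using assms unfolding connected_graph_def by blast
  qed simp
  also have "\<dots> = {V}" using assms unfolding connected_graph_def by auto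
  finally show ?thesis .
qed

lemma reach_all:
  assumes sg: "simple_graph V E" and cg: "connected_graph V E" and ab: "E a b"
    and r: "reach (remove_edge E a b) a b" and y: "y \<in> V"
  shows "reach (remove_edge E a b) a y"
  using conn_ab[OF sg cg ab y] r reach_trans[of "remove_edge E a b" a b y] by blast

lemma comps_R_reach:
  assumes sg: "simple_graph V E" and cg: "connected_graph V E" and ab: "E a b"
    and r: "reach (remove_edge E a b) a b"
  shows "components V (remove_edge E a b) = {V}"
proof -
  let ?R = "remove_edge E a b"
  have "reach ?R x y" if "x \<in> V" "y \<in> V" for x y
  proof -
    have "reach ?R a x" "reach ?R a y" using reach_all[OF sg cg ab r] that by blast+
    then have "reach ?R x a" using reach_sym[OF R_props(1)[OF sg]] by blast
    then show ?thesis using \<open>reach ?R a y\<close> by (rule reach_trans)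
  qed
  then have "connected_graph V ?R" using cg unfolding connected_graph_def by blast
  then show ?thesis by (rule comps_conn)
qed

lemma not_bridge:
  assumes sg: "simple_graph V E" and cg: "connected_graph V E" and ab: "E a b"
    and r: "reach (remove_edge E a b) a b"
  shows "\<not> is_bridge V E a b"
  using comps_R_reach[OF assms] comps_conn[OF cg] unfolding is_bridge_def by simp

lemma bridge_nr:
  assumes sg: "simple_graph V E" and cg: "connected_graph V E" and ab: "E a b"
    and r: "\<not> reach (remove_edge E a b) a b"
  shows "is_bridge V E a b"
proof -
  let ?R = "remove_edge E a b"
  have aV: "a \<in> V" and bV: "b \<in> V" using sg ab unfolding simple_graph_def by blast+
  define Ca where "Ca = {y \<in> V. reach ?R a y}"
  define Cb where "Cb = {y \<in> V. reach ?R b y}"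
  have c1: "Ca \<in> components V ?R" unfolding components_def Ca_def using aV by blast
  have c2: "Cb \<in> components V ?R" unfolding components_def Cb_def using bV by blast
  have "b \<in> Cb" using bV unfolding Cb_def reach_def by simp
  moreover have "b \<notin> Ca" using r unfolding Ca_def by simp
  ultimately have ne: "Ca \<noteq> Cb" by metis
  have fin: "finite (components V ?R)"
  proof -
    have "components V ?R \<subseteq> Pow V" unfolding components_def by blast
    moreover have "finite V" using sg unfolding simple_graph_def by blast
    ultimately show ?thesis by (meson finite_Pow_iff finite_subset)
  qed
  have sub: "{Ca, Cb} \<subseteq> components V ?R" using c1 c2 by blast
  have "card {Ca, Cb} \<le> card (components V ?R)" by (rule card_mono[OF fin sub])
  moreover have "card {Ca, Cb} = 2" using ne by simp
  ultimately show ?thesis using ab comps_conn[OF cg] unfolding is_bridge_def by simp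
qed

lemma bip_comp:
  fixes u :: "'a \<Rightarrow> 'f::field"
  assumes sym: "\<forall>x y. R x y \<longrightarrow> R y x"
    and g: "\<forall>x y. R x y \<longrightarrow> u x + u y = 0"
    and w: "u w \<noteq> - u w"
  shows "bipartite {y \<in> V. reach R w y} (induced R {y \<in> V. reach R w y})"
proof -
  let ?C = "{y \<in> V. reach R w y}"
  let ?A = "{y \<in> ?C. u y = u w}"
  have "\<forall>x y. induced R ?C x y \<longrightarrow> (x \<in> ?A \<longleftrightarrow> y \<notin> ?A)"
  proof (intro allI impI)
    fix x y assume h: "induced R ?C x y"
    then have xy: "R x y" "x \<in> ?C" "y \<in> ?C" unfolding induced_def by auto
    have ux: "u x = u w \<or> u x = - u w" using reach_pm[OF g] xy(2) by blast
    have uy: "u y = - u x" using g xy(1) by (metis add_eq_0_iff)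
    show "x \<in> ?A \<longleftrightarrow> y \<notin> ?A"
    proof
      assume "x \<in> ?A" then have "u y = - u w" using uy by simp
      then show "y \<notin> ?A" using w by simp
    next
      assume "y \<notin> ?A" then have "u y \<noteq> u w" using xy(3) by blast
      then have "u x = u w" using ux uy by auto
      then show "x \<in> ?A" using xy(2) by blast
    qed
  qed
  moreover have "?A \<subseteq> ?C" by blast
  ultimately show ?thesis unfolding bipartite_def by (intro exI[of _ ?A] conjI)
qed

lemma cycle_from_path:
  fixes u :: "'a \<Rightarrow> 'f::field"
  assumes ab: "E a b" and ba: "E b a" and irr: "a \<noteq> b"
    and RE: "\<And>x y. R x y \<Longrightarrow> E x y"
    and g: "\<forall>x y. R x y \<longrightarrow> u x + u y = 0"
    and r: "reach R a b" and uab: "u b = u a" and w: "u a \<noteq> - u a"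
  shows "in_odd_cycle E a b"
proof -
  obtain xs where "rtrancl_path R a xs b" using r unfolding reach_def rtranclp_eq_rtrancl_path by blast
  then obtain ys where p: "rtrancl_path R a ys b" and d: "distinct (a # ys)"
    by (rule rtrancl_path_distinct)
  define c where "c = a # ys"
  define m where "m = length ys"
  have lc: "length c = m + 1" unfolding c_def m_def by simp
  have cm: "c ! m = b" and st: "\<forall>j<m. R (c!j) (c!Suc j)"
    using path_idx[OF p] unfolding c_def m_def by auto
  have c0: "c ! 0 = a" unfolding c_def by simp
  have alt: "j \<le> m \<Longrightarrow> u (c!j) = (if even j then u a else - u a)" for j
  proof (induction j)
    case 0 then show ?case using c0 by simp
  next
    case (Suc j)
    then have "R (c!j) (c!Suc j)" using st by simp
    then have "u (c!Suc j) = - u (c!j)" using g by (metis add_eq_0_iff)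
    then show ?case using Suc by auto
  qed
  have "even m" using alt[of m] cm uab w by (auto split: if_splits)
  moreover have "m \<noteq> 0"
  proof
    assume "m = 0" then show False using cm c0 irr by simp
  qed
  ultimately have m2: "m \<ge> 2" by presburger
  have cyc: "is_cycle E c"
    unfolding is_cycle_def
  proof (intro conjI allI impI)
    show "distinct c" using d c_def by simp
    show "3 \<le> length c" using lc m2 by simp
    fix i assume i: "i < length c"
    show "E (c ! i) (c ! ((i + 1) mod length c))"
    proof (cases "i < m")
      case True then show ?thesis using st RE lc by simp
    next
      case False
      then have "i = m" using i lc by simp
      then show ?thesis using lc cm c0 ba by simp
    qed
  qed
  have md: "(m+1) mod length c = 0" using lc by simp
  have e1: "{c ! m, c ! ((m+1) mod length c)} = {a,b}" unfolding md cm c0 by (rule insert_commute)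
  have e2: "m < length c" using lc by simp
  have e3: "edge_in_cycle c a b" unfolding edge_in_cycle_def
    by (rule exI[of _ m], rule conjI[OF e2 e1])
  have e4: "odd (length c)" using lc \<open>even m\<close> by simp
  show ?thesis unfolding in_odd_cycle_def by (rule exI[of _ c], intro conjI cyc e3 e4)
qed

lemma arith2:
  fixes i j n :: nat
  assumes "i < n" "j + 1 < n"
  shows "(i+1+j) mod n \<noteq> i"
proof (cases "i+1+j < n")
  case True then show ?thesis by simp
next
  case False
  then have "(i+1+j) mod n = (i+1+j-n) mod n" by (simp add: le_mod_geq)
  also have "\<dots> = i+1+j-n" using assms by simp
  finally show ?thesis using assms False by arith
qed

lemma bw1:
  fixes V :: "'a set" and E :: "'a \<Rightarrow> 'a \<Rightarrow> bool"
  assumes sg: "simple_graph V E" and ab: "E a b" and two: "(2::'f::field) \<noteq> 0"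
    and oc: "in_odd_cycle E a b" and bp: "bipartite V (remove_edge E a b)"
  shows "\<exists>u \<in> (U_G V :: ('a \<Rightarrow> 'f) set). (\<forall>x y. remove_edge E a b x y \<longrightarrow> u x + u y = 0) \<and> u a + u b = 1"
proof -
  let ?R = "remove_edge E a b"
  obtain c where cyc: "is_cycle E c" and oddc: "odd (length c)" and eic: "edge_in_cycle c a b"
    using oc unfolding in_odd_cycle_def by blast
  define n where "n = length c"
  obtain i where i: "i < n" and ei: "{c!i, c!((i+1) mod n)} = {a,b}"
    using eic unfolding edge_in_cycle_def n_def by blast
  have dc: "distinct c" and n3: "3 \<le> n" and cE: "\<And>k. k < n \<Longrightarrow> E (c!k) (c!((k+1) mod n))"
    using cyc unfolding is_cycle_def n_def by auto
  obtain A where AV: "A \<subseteq> V" and sideA: "\<forall>x y. ?R x y \<longrightarrow> (x \<in> A \<longleftrightarrow> y \<notin> A)"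
    using bp unfolding bipartite_def by blast
  define g where "g j = c!((i+1+j) mod n)" for j
  have stp: "?R (g j) (g (Suc j))" if j: "j + 1 < n" for j
  proof -
    define k where "k = (i+1+j) mod n"
    have kn: "k < n" using n3 unfolding k_def by simp
    have hE: "E (c!k) (c!((k+1) mod n))" using cE[OF kn] .
    have hk: "(i+1+Suc j) mod n = (k+1) mod n" unfolding k_def
      by (metis Suc_eq_plus1 add_Suc_right mod_Suc_eq)
    have kne: "k \<noteq> i" unfolding k_def using arith2[OF i j] .
    have ne: "{c!k, c!((k+1) mod n)} \<noteq> {a,b}"
    proof
      assume "{c!k, c!((k+1) mod n)} = {a,b}"
      then have "{c!k, c!((k+1) mod n)} = {c!i, c!((i+1) mod n)}" using ei by simp
      then have "c!k = c!i \<and> c!((k+1) mod n) = c!((i+1) mod n) \<or>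
                 c!k = c!((i+1) mod n) \<and> c!((k+1) mod n) = c!i" by (simp add: doubleton_eq_iff)
      then show False
      proof
        assume "c!k = c!i \<and> c!((k+1) mod n) = c!((i+1) mod n)"
        then have "k = i" using nth_eq_iff_index_eq[OF dc] kn i n_def by simp
        then show False using kne by simp
      next
        assume h: "c!k = c!((i+1) mod n) \<and> c!((k+1) mod n) = c!i"
        have n0: "0 < n" using n3 by simp
        have "k = (i+1) mod n" using h nth_eq_iff_index_eq[OF dc] kn n0 n_def by simp
        moreover have "(k+1) mod n = i" using h nth_eq_iff_index_eq[OF dc] i n0 n_def by simp
        ultimately show False using arith_cyc[OF i n3] by blast
      qed
    qed
    show ?thesis unfolding remove_edge_def g_def using hE ne hk k_def by simp
  qed
  have alt: "j < n \<Longrightarrow> ((g j \<in> A) = (g 0 \<in> A)) = even j" for j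
  proof (induction j)
    case 0 then show ?case by simp
  next
    case (Suc j)
    have "g j \<in> A \<longleftrightarrow> g (Suc j) \<notin> A" using sideA stp[of j] Suc.prems by simp
    then show ?case using Suc by auto
  qed
  have "even (n - 1)" using oddc n_def n3 by simp
  then have "(g (n-1) \<in> A) = (g 0 \<in> A)" using alt[of "n-1"] n3 by simp
  moreover have "g (n-1) = c!i"
  proof -
    have "i+1+(n-1) = i + n" using n3 by simp
    then show ?thesis unfolding g_def using i by simp
  qed
  moreover have "g 0 = c!((i+1) mod n)" unfolding g_def by simp
  ultimately have same0: "(c!i \<in> A) = (c!((i+1) mod n) \<in> A)" by simp
  have same: "(a \<in> A) = (b \<in> A)"
    using ei same0 by (auto simp: doubleton_eq_iff)
  have aV: "a \<in> V" and bV: "b \<in> V" using sg ab unfolding simple_graph_def by blast+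
  define h :: 'f where "h = (if a \<in> A then 1/2 else - (1/2))"
  define u :: "'a \<Rightarrow> 'f" where "u y = (if y \<in> V then (if y \<in> A then h else - h) else 0)" for y
  have half: "(1/2::'f) + 1/2 = 1" using two by (simp add: add_divide_distrib[symmetric])
  have uU: "u \<in> U_G V" unfolding U_G_def u_def by simp
  have good: "\<forall>x y. ?R x y \<longrightarrow> u x + u y = 0"
  proof (intro allI impI)
    fix x y assume r: "?R x y"
    then have "x \<in> V" "y \<in> V" using R_props(2)[OF sg] by blast+
    moreover have "x \<in> A \<longleftrightarrow> y \<notin> A" using sideA r by blast
    ultimately show "u x + u y = 0" unfolding u_def by auto
  qed
  have "u a + u b = 1"
  proof (cases "a \<in> A")
    case True
    then have "b \<in> A" using same by simp
    then show ?thesis using True aV bV half unfolding u_def h_def by simp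
  next
    case False
    then have "b \<notin> A" using same by simp
    then show ?thesis using False aV bV half unfolding u_def h_def by simp
  qed
  then show ?thesis using uU good by blast
qed

lemma bw2g:
  fixes u :: "'a \<Rightarrow> 'f::field"
  assumes sym: "\<forall>x y. R x y \<longrightarrow> R y x" and inV: "\<And>x y. R x y \<Longrightarrow> x \<in> V \<and> y \<in> V"
    and nr: "\<not> reach R w w'" and wV: "w \<in> V"
    and bp: "bipartite {y \<in> V. reach R w y} (induced R {y \<in> V. reach R w y})"
  shows "\<exists>u \<in> (U_G V :: ('a \<Rightarrow> 'f) set). (\<forall>x y. R x y \<longrightarrow> u x + u y = 0) \<and> u w = 1 \<and> u w' = 0"
proof -
  define C where "C = {y \<in> V. reach R w y}"
  obtain A where AC: "A \<subseteq> C" and sideA: "\<forall>x y. induced R C x y \<longrightarrow> (x \<in> A \<longleftrightarrow> y \<notin> A)"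
    using bp unfolding bipartite_def C_def by blast
  define s :: 'f where "s = (if w \<in> A then 1 else -1)"
  define u :: "'a \<Rightarrow> 'f" where "u y = (if y \<in> C then (if y \<in> A then s else - s) else 0)" for y
  have wC: "w \<in> C" unfolding C_def reach_def using wV by simp
  have w'C: "w' \<notin> C" unfolding C_def using nr by simp
  have uw: "u w = 1" unfolding u_def s_def using wC by simp
  have uw': "u w' = 0" unfolding u_def using w'C by simp
  have uU: "u \<in> U_G V" unfolding U_G_def u_def C_def by simp
  have good: "\<forall>x y. R x y \<longrightarrow> u x + u y = 0"
  proof (intro allI impI)
    fix x y assume r: "R x y"
    show "u x + u y = 0"
    proof (cases "x \<in> C")
      case True
      then have "reach R w x" unfolding C_def by simp
      then have "reach R w y" using r unfolding reach_def by simp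
      then have yC: "y \<in> C" unfolding C_def using inV[OF r] by simp
      then have "induced R C x y" unfolding induced_def using r True by simp
      then have "x \<in> A \<longleftrightarrow> y \<notin> A" using sideA by blast
      then show ?thesis unfolding u_def using True yC by auto
    next
      case False
      have "y \<notin> C"
      proof
        assume yC: "y \<in> C"
        then have "reach R w y" unfolding C_def by simp
        moreover have "R y x" using sym r by blast
        ultimately have "reach R w x" unfolding reach_def by (rule rtranclp.rtrancl_into_rtrancl)
        then have "x \<in> C" unfolding C_def using inV[OF r] by simp
        then show False using False by simp
      qed
      then show ?thesis unfolding u_def using False by simp
    qed
  qed
  show ?thesis using uU good uw uw' by blast
qed

lemma neg_self:
  fixes x :: "'f::field"
  assumes "(2::'f) \<noteq> 0" "x \<noteq> 0" shows "x \<noteq> - x"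
proof
  assume "x = - x"
  then have "2 * x = 0" by (metis add_eq_0_iff mult_2)
  then show False using assms by simp
qed

theorem proposition6p1:
  fixes V :: "'a set" and E :: "'a \<Rightarrow> 'a \<Rightarrow> bool" and a b :: 'a
  assumes "simple_graph V E" and "connected_graph V E"
    and "CHAR('f::field) \<noteq> 2"
    and "E a b"
  shows "(\<exists>u \<in> (U_G V :: ('a \<Rightarrow> 'f) set). nga_mult E u u = edge_vec a b) \<longleftrightarrow>
    ((in_odd_cycle E a b \<and> bipartite V (remove_edge E a b)) \<or>
     (is_bridge V E a b \<and>
       (\<exists>C \<in> components V (remove_edge E a b). bipartite C (induced (remove_edge E a b) C))))"
proof -
  note sg = assms(1) and cg = assms(2) and ab = assms(4)
  let ?R = "remove_edge E a b"
  have two: "(2::'f) \<noteq> 0" using two_nz[OF assms(3)] .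
  have ba: "E b a" and irr: "a \<noteq> b" and aV: "a \<in> V" and bV: "b \<in> V"
    using sg ab unfolding simple_graph_def by metis+
  have symR: "\<forall>x y. ?R x y \<longrightarrow> ?R y x" using R_props(1)[OF sg] .
  have inV: "\<And>x y. ?R x y \<Longrightarrow> x \<in> V \<and> y \<in> V" using R_props(2)[OF sg] .
  have RE: "\<And>x y. ?R x y \<Longrightarrow> E x y" using R_props(3)[OF sg] .
  show ?thesis unfolding sq_iff[OF sg ab]
  proof
    assume "\<exists>u \<in> (U_G V :: ('a \<Rightarrow> 'f) set). (\<forall>x y. ?R x y \<longrightarrow> u x + u y = 0) \<and> u a + u b = 1"
    then obtain u :: "'a \<Rightarrow> 'f" where uU: "u \<in> U_G V" and g: "\<forall>x y. ?R x y \<longrightarrow> u x + u y = 0"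
      and s: "u a + u b = 1" by blast
    show "(in_odd_cycle E a b \<and> bipartite V ?R) \<or>
     (is_bridge V E a b \<and> (\<exists>C \<in> components V ?R. bipartite C (induced ?R C)))"
    proof (cases "reach ?R a b")
      case True
      have "u b = u a \<or> u b = - u a" using reach_pm[OF g True] .
      moreover have "u b \<noteq> - u a" using s by auto
      ultimately have uab: "u b = u a" by blast
      have w: "u a \<noteq> - u a" using s uab by auto
      have oc: "in_odd_cycle E a b" using cycle_from_path[OF ab ba irr RE g True uab w] .
      have bpc: "bipartite {y \<in> V. reach ?R a y} (induced ?R {y \<in> V. reach ?R a y})"
        using bip_comp[OF symR g w] .
      have "{y \<in> V. reach ?R a y} = V" using reach_all[OF sg cg ab True] by blast
      moreover have "induced ?R V = ?R" unfolding induced_def using inV by (intro ext) blast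
      ultimately have "bipartite V ?R" using bpc by simp
      then show ?thesis using oc by blast
    next
      case False
      have br: "is_bridge V E a b" using bridge_nr[OF sg cg ab False] .
      obtain w where wV: "w \<in> V" and uw: "u w \<noteq> 0"
      proof (cases "u a = 0")
        case True
        then have "u b \<noteq> 0" using s by simp
        then show ?thesis using that bV by blast
      next
        case False then show ?thesis using that aV by blast
      qed
      have "bipartite {y \<in> V. reach ?R w y} (induced ?R {y \<in> V. reach ?R w y})"
        using bip_comp[OF symR g neg_self[OF two uw]] .
      moreover have "{y \<in> V. reach ?R w y} \<in> components V ?R" unfolding components_def using wV by blast
      ultimately show ?thesis using br by blast
    qed
  next
    assume h: "(in_odd_cycle E a b \<and> bipartite V ?R) \<or>
     (is_bridge V E a b \<and> (\<exists>C \<in> components V ?R. bipartite C (induced ?R C)))"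
    show "\<exists>u \<in> (U_G V :: ('a \<Rightarrow> 'f) set). (\<forall>x y. ?R x y \<longrightarrow> u x + u y = 0) \<and> u a + u b = 1"
    proof (cases "in_odd_cycle E a b \<and> bipartite V ?R")
      case True then show ?thesis using bw1[OF sg ab two] by blast
    next
      case False
      then have br: "is_bridge V E a b" and "\<exists>C \<in> components V ?R. bipartite C (induced ?R C)"
        using h by blast+
      then obtain C where C: "C \<in> components V ?R" and bpC: "bipartite C (induced ?R C)" by blast
      have nr: "\<not> reach ?R a b" using not_bridge[OF sg cg ab] br by blast
      have nr': "\<not> reach ?R b a" using nr reach_sym[OF symR] by blast
      obtain x where xV: "x \<in> V" and Cx: "C = {y \<in> V. reach ?R x y}"
        using C unfolding components_def by blast
      have same: "{y \<in> V. reach ?R x y} = {y \<in> V. reach ?R w y}" if "reach ?R w x" for w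
      proof (rule Collect_cong)
        fix y
        have "reach ?R x w" using reach_sym[OF symR that] .
        then show "(y \<in> V \<and> reach ?R x y) = (y \<in> V \<and> reach ?R w y)"
          using that reach_trans[of ?R] by blast
      qed
      show ?thesis
      proof (cases "reach ?R a x")
        case True
        then have "bipartite {y \<in> V. reach ?R a y} (induced ?R {y \<in> V. reach ?R a y})"
          using bpC Cx same by simp
        from bw2g[OF symR inV nr aV this] obtain u :: "'a \<Rightarrow> 'f" where
          "u \<in> U_G V" "\<forall>x y. ?R x y \<longrightarrow> u x + u y = 0" "u a = 1" "u b = 0" by blast
        then show ?thesis by (intro bexI[of _ u]) simp_all
      next
        case False
        then have "reach ?R b x" using conn_ab[OF sg cg ab xV] by blast
        then have "bipartite {y \<in> V. reach ?R b y} (induced ?R {y \<in> V. reach ?R b y})"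
          using bpC Cx same by simp
        from bw2g[OF symR inV nr' bV this] obtain u :: "'a \<Rightarrow> 'f" where
          "u \<in> U_G V" "\<forall>x y. ?R x y \<longrightarrow> u x + u y = 0" "u b = 1" "u a = 0" by blast
        then show ?thesis by (intro bexI[of _ u]) simp_all
      qed
    qed
  qed
qed

end
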